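(* Let $D$ be a reduced knot diagram, let $2\le k<\infty$, and fix a version of the $k$-color region select game on $D$ and a checkerboard shading of $D$. Let $r_1$ be a shaded region and $r_2$ an unshaded region. (i) If $k=2^t$ for some integer $t\ge1$, then every color configuration has a unique solving pattern in which $r_1$ and $r_2$ are not pushed. (ii) If $k$ is not a power of $2$, let $p$ be the smallest odd prime factor of $k$. If $d(r_1,r_2)<p$, then every color configuration has a unique solving pattern in which $r_1$ and $r_2$ are not pushed.
   Context: Diagrams: a link (knot) diagram $D$ is the underlying graph of a regular projection of a link (knot) into $S^2$. Its vertices are the crossings, each of valence 4, and over/under information is ignored. Components without crossings are closed loops, each regarded as one edge with no vertices. Regions of $D$ are the connected components of $S^2\setminus D$. A vertex or edge is incident to a region if it lies in the boundary of that region. Two regions are adjacent if they are incident to a common edge. A vertex $v$ is reducible if some circle in $S^2$ meets $D$ transversely only at $v$, and irreducible otherwise. An irreducible vertex is incident to four distinct regions. A reducible vertex $v$ is incident to exactly three regions $r_0,r_1,r_2$, where $r_0$ touches $v$ from two sides and $r_1,r_2$ touch it from one side. A knot diagram with $n$ vertices has $n+2$ regions. A knot diagram is reduced if all its vertices are irreducible. Ring: for an integer $k\ge2$ let $\mathbb{Z}_k=\mathbb{Z}/k\mathbb{Z}$, and for $k=\infty$ let $\mathbb{Z}_\infty=\mathbb{Z}$. Game versions: a version of the $k$-color region select game on $D$ is a choice of an increment number $a(v,r)\in\mathbb{Z}_k$ for every incident vertex–region pair, subject to the following rules. - If $k<\infty$ and $v$ is irreducible, then $a(v,r)=a_v$ is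 the same for all regions $r$ incident to $v$, and $a_v$ is not a zero divisor of $\mathbb{Z}_k$. - If $k<\infty$ and $v$ is reducible, then $a(v,r_0)$ is arbitrary, while $a(v,r_1)$ and $a(v,r_2)$ are not zero divisors. - If $k=\infty$, then $a(v,r)=1$, except that $a(v,r_0)\in\mathbb{Z}$ is arbitrary when $v$ is reducible. - The original game is the version in which all increment numbers equal $1$. Game matrix: enumerate the vertices as $v_1,\dots,v_n$ and the regions as $r_1,\dots,r_m$. The game matrix is the $n\times m$ matrix $M$ over $\mathbb{Z}_k$ with $M_{ij}=a(v_i,r_j)$ if $v_i$ is incident to $r_j$, and $M_{ij}=0$ otherwise. Patterns and configurations: a push pattern is a vector $\mathbf p\in\mathbb{Z}_k^m$, and $\mathbf p(r_j)=p_j$ is the number of times $r_j$ is pushed. A region $r$ is not pushed in $\mathbf p$ if $\mathbf p(r)=0$. A color configuration is a vector $\mathbf c\in\mathbb{Z}_k^n$. Applying $\mathbf p$ to $\mathbf c$ yields $\mathbf c+M\mathbf p$. The configuration $\mathbf c$ is solvable if some $\mathbf p$ satisfies $M\mathbf p=-\mathbf c$; such a $\mathbf p$ is a solving pattern for $\mathbf c$. $D$ is always solvable in the version if every $\mathbf c\in\mathbb{Z}_k^n$ is solvable. A null pattern is an element of $Ker_k(M)=\{\mathbf p\in\mathbb{Z}_k^m: M\mathbf p=0\}$. Checkerboard shading: a checkerboard shading of $D$ is a shading of some of its regions such that, of any two adjacent regions, exactly one is shaded. Distance: the dual graph of $D$ has one vertex per region, with an edge between the vertices of each pair of adjacent regions.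 The distance $d(r_1,r_2)$ is the graph distance between the corresponding vertices of the dual graph. *)

theory Defs
  imports "HOL-Computational_Algebra.Primes" "HOL-Number_Theory.Cong"
begin

text \<open>Combinatorial encoding of a diagram on S^2 by a combinatorial map:
  a finite set H of darts (half-edges), a fixed-point-free involution al
  (the two halves of an edge) and a permutation sg (cyclic order of the four
  half-edges around a crossing).\<close>

definition orb :: "('d \<Rightarrow> 'd) \<Rightarrow> 'd \<Rightarrow> 'd set" where
  "orb f d = range (\<lambda>n. (f ^^ n) d)"

definition vertices :: "'d set \<Rightarrow> ('d \<Rightarrow> 'd) \<Rightarrow> 'd set set" where
  "vertices H sg = (\<lambda>d. orb sg d) ` H"

definition edges :: "'d set \<Rightarrow> ('d \<Rightarrow> 'd) \<Rightarrow> 'd set set" where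
  "edges H al = (\<lambda>d. {d, al d}) ` H"

definition regions :: "'d set \<Rightarrow> ('d \<Rightarrow> 'd) \<Rightarrow> ('d \<Rightarrow> 'd) \<Rightarrow> 'd set set" where
  "regions H al sg = (\<lambda>d. orb (sg \<circ> al) d) ` H"

text \<open>straight-ahead successor: leave along the edge, continue on the opposite half-edge\<close>
definition straight :: "('d \<Rightarrow> 'd) \<Rightarrow> ('d \<Rightarrow> 'd) \<Rightarrow> 'd \<Rightarrow> 'd" where
  "straight al sg = sg \<circ> sg \<circ> al"

text \<open>A knot diagram with at least one crossing: connected 4-regular map of genus 0
  (Euler characteristic 2) whose straight-ahead walks form a single closed curve
  (two straight-ahead orbits = the two orientations of one component).\<close>
definition knot_diagram :: "'d set \<Rightarrow> ('d \<Rightarrow> 'd) \<Rightarrow> ('d \<Rightarrow> 'd) \<Rightarrow> bool" where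
  "knot_diagram H al sg \<longleftrightarrow>
     finite H \<and> H \<noteq> {} \<and>
     bij_betw sg H H \<and>
     (\<forall>d\<in>H. al d \<in> H \<and> al d \<noteq> d \<and> al (al d) = d) \<and>
     (\<forall>d\<in>H. card (orb sg d) = 4) \<and>
     (\<forall>d\<in>H. \<forall>e\<in>H. (d, e) \<in> ({(x, al x) | x. x \<in> H} \<union> {(x, sg x) | x. x \<in> H})\<^sup>*) \<and>
     int (card (vertices H sg)) - int (card (edges H al)) + int (card (regions H al sg)) = 2 \<and>
     card ((\<lambda>d. orb (straight al sg) d) ` H) = 2"

definition incident :: "'d set \<Rightarrow> 'd set \<Rightarrow> bool" where
  "incident v r \<longleftrightarrow> v \<inter> r \<noteq> {}"

definition irreducible_vertex :: "'d set \<Rightarrow> ('d \<Rightarrow> 'd) \<Rightarrow> ('d \<Rightarrow> 'd) \<Rightarrow> 'd set \<Rightarrow> bool" where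
  "irreducible_vertex H al sg v \<longleftrightarrow> card {r \<in> regions H al sg. incident v r} = 4"

definition reduced :: "'d set \<Rightarrow> ('d \<Rightarrow> 'd) \<Rightarrow> ('d \<Rightarrow> 'd) \<Rightarrow> bool" where
  "reduced H al sg \<longleftrightarrow> (\<forall>v \<in> vertices H sg. irreducible_vertex H al sg v)"

text \<open>Z_k represented by int modulo k\<close>
definition non_zero_divisor :: "nat \<Rightarrow> int \<Rightarrow> bool" where
  "non_zero_divisor k x \<longleftrightarrow> (\<forall>y. [x * y = 0] (mod int k) \<longrightarrow> [y = 0] (mod int k))"

definition game_version :: "'d set \<Rightarrow> ('d \<Rightarrow> 'd) \<Rightarrow> ('d \<Rightarrow> 'd) \<Rightarrow> nat \<Rightarrow> ('d set \<Rightarrow> 'd set \<Rightarrow> int) \<Rightarrow> bool" where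
  "game_version H al sg k a \<longleftrightarrow>
     (\<forall>v \<in> vertices H sg.
        (irreducible_vertex H al sg v \<longrightarrow>
           (\<exists>c. non_zero_divisor k c \<and>
                (\<forall>r \<in> regions H al sg. incident v r \<longrightarrow> [a v r = c] (mod int k)))) \<and>
        (\<not> irreducible_vertex H al sg v \<longrightarrow>
           (\<forall>r \<in> regions H al sg. incident v r \<and> card (v \<inter> r) = 1 \<longrightarrow> non_zero_divisor k (a v r))))"

definition game_matrix :: "('d set \<Rightarrow> 'd set \<Rightarrow> int) \<Rightarrow> 'd set \<Rightarrow> 'd set \<Rightarrow> int" where
  "game_matrix a v r = (if incident v r then a v r else 0)"

definition solving_pattern :: "'d set \<Rightarrow> ('d \<Rightarrow> 'd) \<Rightarrow> ('d \<Rightarrow> 'd) \<Rightarrow> nat \<Rightarrow> ('d set \<Rightarrow> 'd set \<Rightarrow> int)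
      \<Rightarrow> ('d set \<Rightarrow> int) \<Rightarrow> ('d set \<Rightarrow> int) \<Rightarrow> bool" where
  "solving_pattern H al sg k a c p \<longleftrightarrow>
     (\<forall>v \<in> vertices H sg.
        [c v + (\<Sum>r \<in> regions H al sg. game_matrix a v r * p r) = 0] (mod int k))"

definition unique_solving_fixing :: "'d set \<Rightarrow> ('d \<Rightarrow> 'd) \<Rightarrow> ('d \<Rightarrow> 'd) \<Rightarrow> nat \<Rightarrow> ('d set \<Rightarrow> 'd set \<Rightarrow> int)
      \<Rightarrow> 'd set \<Rightarrow> 'd set \<Rightarrow> bool" where
  "unique_solving_fixing H al sg k a r1 r2 \<longleftrightarrow>
     (\<forall>c. (\<exists>p. solving_pattern H al sg k a c p \<and> [p r1 = 0] (mod int k) \<and> [p r2 = 0] (mod int k)) \<and>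
          (\<forall>p q. solving_pattern H al sg k a c p \<and> [p r1 = 0] (mod int k) \<and> [p r2 = 0] (mod int k) \<and>
                 solving_pattern H al sg k a c q \<and> [q r1 = 0] (mod int k) \<and> [q r2 = 0] (mod int k)
                 \<longrightarrow> (\<forall>r \<in> regions H al sg. [p r = q r] (mod int k))))"

definition edge_incident :: "'d set \<Rightarrow> 'd set \<Rightarrow> bool" where
  "edge_incident e r \<longleftrightarrow> e \<inter> r \<noteq> {}"

definition adjacent :: "'d set \<Rightarrow> ('d \<Rightarrow> 'd) \<Rightarrow> 'd set \<Rightarrow> 'd set \<Rightarrow> bool" where
  "adjacent H al r r' \<longleftrightarrow> r \<noteq> r' \<and> (\<exists>e \<in> edges H al. edge_incident e r \<and> edge_incident e r')"

definition checkerboard :: "'d set \<Rightarrow> ('d \<Rightarrow> 'd) \<Rightarrow> ('d \<Rightarrow> 'd) \<Rightarrow> 'd set set \<Rightarrow> bool" where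
  "checkerboard H al sg S \<longleftrightarrow> S \<subseteq> regions H al sg \<and>
     (\<forall>r \<in> regions H al sg. \<forall>r' \<in> regions H al sg.
        adjacent H al r r' \<longrightarrow> (r \<in> S \<longleftrightarrow> r' \<notin> S))"

definition dual_dist :: "'d set \<Rightarrow> ('d \<Rightarrow> 'd) \<Rightarrow> ('d \<Rightarrow> 'd) \<Rightarrow> 'd set \<Rightarrow> 'd set \<Rightarrow> nat" where
  "dual_dist H al sg r r' = (LEAST n. \<exists>ps. length ps = Suc n \<and> hd ps = r \<and> last ps = r' \<and>
      set ps \<subseteq> regions H al sg \<and> (\<forall>i < n. adjacent H al (ps ! i) (ps ! Suc i)))"

end

theory Submission
  imports Defs "HOL-Library.FuncSet"
begin

lemma orb_self: "d \<in> orb f d"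
  unfolding orb_def by (metis funpow_0 rangeI)

lemma funpow_in_orb: "(f ^^ n) d \<in> orb f d"
  unfolding orb_def by auto

lemma orb_sub: assumes "x \<in> orb f d" shows "orb f x \<subseteq> orb f d"
proof
  fix y assume "y \<in> orb f x"
  from assms obtain i where x: "x = (f^^i) d" unfolding orb_def by auto
  from \<open>y \<in> orb f x\<close> obtain j where "y = (f^^j) x" unfolding orb_def by auto
  then have "y = (f^^(j+i)) d" using x by (simp add: funpow_add)
  then show "y \<in> orb f d" by (simp add: funpow_in_orb)
qed

lemma funpow_closed: assumes "f ` H \<subseteq> H" "d \<in> H" shows "(f^^n) d \<in> H"
proof (induction n)
  case 0 then show ?case using assms(2) by simp
next
  case (Suc n) then show ?case using assms(1) by (simp add: image_subset_iff)
qed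

lemma orb_closed: "f ` H \<subseteq> H \<Longrightarrow> d \<in> H \<Longrightarrow> orb f d \<subseteq> H"
  unfolding orb_def using funpow_closed[of f H d] by auto

lemma period_exists:
  assumes "finite H" "bij_betw f H H" "d \<in> H"
  shows "\<exists>n>0. (f^^n) d = d"
proof -
  have fH: "f ` H \<subseteq> H" using assms(2) bij_betw_imp_surj_on by blast
  have "\<not> inj_on (\<lambda>i. (f^^i) d) {..card H}"
  proof
    assume inj: "inj_on (\<lambda>i. (f^^i) d) {..card H}"
    have "(\<lambda>i. (f^^i) d) ` {..card H} \<subseteq> H" using funpow_closed[OF fH assms(3)] by auto
    then have "card ((\<lambda>i. (f^^i) d) ` {..card H}) \<le> card H" using assms(1) card_mono by blast
    moreover have "card ((\<lambda>i. (f^^i) d) ` {..card H}) = Suc (card H)" using card_image[OF inj] by simp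
    ultimately show False by simp
  qed
  then obtain i j where ij: "i \<noteq> j" "(f^^i) d = (f^^j) d" unfolding inj_on_def by auto
  then obtain i j where ij: "i < j" "(f^^i) d = (f^^j) d" by (metis linorder_neq_iff)
  have "(f^^j) d = (f^^(i + (j-i))) d" using ij(1) by simp
  also have "\<dots> = (f^^i) ((f^^(j-i)) d)" by (simp only: funpow_add o_apply)
  finally have e: "(f^^i) ((f^^(j-i)) d) = (f^^i) d" using ij(2) by simp
  moreover have "inj_on (f^^i) H" using bij_betw_funpow[OF assms(2)] bij_betw_imp_inj_on by blast
  moreover have "(f^^(j-i)) d \<in> H" using funpow_closed[OF fH assms(3)] .
  ultimately have "(f^^(j-i)) d = d" using e assms(3) inj_onD[of "f^^i" H] by blast
  then show ?thesis using ij(1) by (intro exI[of _ "j-i"]) auto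
qed

lemma funpow_mult_period: "(f^^n) d = d \<Longrightarrow> (f^^(q*n)) d = d"
proof (induction q)
  case 0 then show ?case by simp
next
  case (Suc q)
  have "(f^^(Suc q * n)) d = (f^^n) ((f^^(q*n)) d)" by (simp add: funpow_add)
  then show ?case using Suc by simp
qed

lemma funpow_mod_period: "(f^^n) d = d \<Longrightarrow> (f^^m) d = (f^^(m mod n)) d"
proof -
  assume a: "(f^^n) d = d"
  have "(f^^m) d = (f^^(m mod n + (m div n)*n)) d" by simp
  also have "\<dots> = (f^^(m mod n)) ((f^^((m div n)*n)) d)" by (metis funpow_add o_apply)
  also have "\<dots> = (f^^(m mod n)) d" using funpow_mult_period[OF a] by simp
  finally show ?thesis .
qed

lemma orb_period: "0 < n \<Longrightarrow> (f^^n) d = d \<Longrightarrow> orb f d = (\<lambda>i. (f^^i) d) ` {..<n}"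
proof -
  assume a: "0 < n" "(f^^n) d = d"
  show ?thesis unfolding orb_def
  proof (intro equalityI subsetI)
    fix x assume "x \<in> range (\<lambda>m. (f ^^ m) d)"
    then obtain m where "x = (f^^m) d" by auto
    then have "x = (f^^(m mod n)) d" using funpow_mod_period[OF a(2)] by simp
    moreover have "m mod n \<in> {..<n}" using a(1) by simp
    ultimately show "x \<in> (\<lambda>i. (f ^^ i) d) ` {..<n}" by blast
  qed auto
qed

lemma orb_eq:
  assumes "finite H" "bij_betw f H H" "d \<in> H" "x \<in> orb f d"
  shows "orb f x = orb f d"
proof
  show "orb f x \<subseteq> orb f d" using orb_sub[OF assms(4)] .
  obtain n where n: "n > 0" "(f^^n) d = d" using period_exists[OF assms(1-3)] by blast
  obtain i where x: "x = (f^^i) d" using assms(4) unfolding orb_def by auto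
  have n1: "1 \<le> n" using n(1) by simp
  have "i * 1 \<le> i * n" using n1 by (rule mult_le_mono2)
  then have le: "i \<le> i * n" by simp
  have "(f^^(i*n - i)) x = (f^^(i*n - i + i)) d" using x by (simp add: funpow_add)
  also have "i*n - i + i = i*n" using le by simp
  also have "(f^^(i*n)) d = d" using funpow_mult_period[OF n(2)] .
  finally have "d = (f^^(i*n - i)) x" by simp
  then have "d \<in> orb f x" using funpow_in_orb[where f=f and n="i*n - i" and d=x] by simp
  then show "orb f d \<subseteq> orb f x" by (rule orb_sub)
qed

locale kd =
  fixes H :: "'d set" and al sg :: "'d \<Rightarrow> 'd"
  assumes kd: "knot_diagram H al sg" and red: "reduced H al sg"
begin

lemma finH: "finite H" using kd unfolding knot_diagram_def by blast
lemma Hne: "H \<noteq> {}" using kd unfolding knot_diagram_def by blast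
lemma bij_sg: "bij_betw sg H H" using kd unfolding knot_diagram_def by blast
lemma al_in: "d \<in> H \<Longrightarrow> al d \<in> H" using kd unfolding knot_diagram_def by blast
lemma al_neq: "d \<in> H \<Longrightarrow> al d \<noteq> d" using kd unfolding knot_diagram_def by blast
lemma al_al: "d \<in> H \<Longrightarrow> al (al d) = d" using kd unfolding knot_diagram_def by blast
lemma card4: "d \<in> H \<Longrightarrow> card (orb sg d) = 4" using kd unfolding knot_diagram_def by blast
lemma conn: "d \<in> H \<Longrightarrow> e \<in> H \<Longrightarrow>
   (d, e) \<in> ({(x, al x) | x. x \<in> H} \<union> {(x, sg x) | x. x \<in> H})\<^sup>*"
  using kd unfolding knot_diagram_def by blast
lemma euler: "int (card (vertices H sg)) - int (card (edges H al)) + int (card (regions H al sg)) = 2"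
  using kd unfolding knot_diagram_def by blast
lemma straight2: "card ((\<lambda>d. orb (straight al sg) d) ` H) = 2"
  using kd unfolding knot_diagram_def by blast

lemma sg_in: "d \<in> H \<Longrightarrow> sg d \<in> H" using bij_sg bij_betwE by blast
lemma sgH: "sg ` H \<subseteq> H" using sg_in by blast
lemma inj_sg: "inj_on sg H" using bij_sg bij_betw_imp_inj_on by blast

lemma bij_al: "bij_betw al H H"
  by (rule bij_betwI[where g=al]) (auto simp: al_in al_al)

lemma bij_sa: "bij_betw (sg \<circ> al) H H"
  using bij_betw_trans[OF bij_al bij_sg] .

lemma bij_st: "bij_betw (straight al sg) H H"
  unfolding straight_def using bij_betw_trans[OF bij_sa bij_sg] by (simp add: comp_assoc)

lemma sg_period:
  assumes d: "d \<in> H" shows "(sg^^4) d = d" "sg (sg d) \<noteq> d"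
proof -
  have bound: "4 \<le> n" if "0 < n" "(sg^^n) d = d" for n
  proof -
    have "card (orb sg d) \<le> n" using orb_period[OF that] card_image_le[of "{..<n}"] by simp
    then show ?thesis using card4[OF d] by simp
  qed
  have "\<not> inj_on (\<lambda>i. (sg^^i) d) {..4::nat}"
  proof
    assume inj: "inj_on (\<lambda>i. (sg^^i) d) {..4::nat}"
    have "(\<lambda>i. (sg^^i) d) ` {..4} \<subseteq> orb sg d" by (rule image_subsetI) (rule funpow_in_orb)
    then have "card ((\<lambda>i. (sg^^i) d) ` {..4::nat}) \<le> card (orb sg d)"
      using card_mono orb_closed[OF sgH d] finite_subset finH by metis
    moreover have "card ((\<lambda>i. (sg^^i) d) ` {..4::nat}) = 5" using card_image[OF inj] by simp
    ultimately show False using card4[OF d] by simp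
  qed
  then obtain i j where ij: "i \<le> 4" "j \<le> 4" "i \<noteq> j" "(sg^^i) d = (sg^^j) d" unfolding inj_on_def by auto
  then obtain i j where ij: "i < j" "j \<le> 4" "(sg^^i) d = (sg^^j) d" by (metis linorder_neq_iff)
  have "(sg^^j) d = (sg^^(i + (j-i))) d" using ij(1) by simp
  also have "\<dots> = (sg^^i) ((sg^^(j-i)) d)" by (simp only: funpow_add o_apply)
  finally have e: "(sg^^i) ((sg^^(j-i)) d) = (sg^^i) d" using ij(3) by simp
  have "inj_on (sg^^i) H" using bij_betw_funpow[OF bij_sg] bij_betw_imp_inj_on by blast
  moreover have "(sg^^(j-i)) d \<in> H" using funpow_closed[OF sgH d] .
  ultimately have p: "(sg^^(j-i)) d = d" using e d inj_onD[of "sg^^i" H] by blast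
  have "4 \<le> j - i" using bound[OF _ p] ij(1) by simp
  then have "j - i = 4" using ij by simp
  then show "(sg^^4) d = d" using p by simp
  show "sg (sg d) \<noteq> d"
  proof
    assume "sg (sg d) = d"
    then have "(sg^^2) d = d" by (simp add: eval_nat_numeral)
    then show False using bound[of 2] by simp
  qed
qed

lemma sg4: "d \<in> H \<Longrightarrow> sg (sg (sg (sg d))) = d"
  using sg_period(1)[of d] by (simp add: eval_nat_numeral)

lemma orb_sg: "d \<in> H \<Longrightarrow> orb sg d = {d, sg d, sg (sg d), sg (sg (sg d))}"
  using orb_period[of 4 sg d] sg_period(1)[of d]
  by (simp add: lessThan_Suc eval_nat_numeral insert_commute)

definition face :: "'d \<Rightarrow> 'd set" where "face d = orb (sg \<circ> al) d"

lemma regions_eq: "regions H al sg = face ` H"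
  unfolding regions_def face_def by simp

lemma face_self: "d \<in> face d" unfolding face_def by (rule orb_self)

lemma face_eq: "d \<in> H \<Longrightarrow> x \<in> face d \<Longrightarrow> face x = face d"
  unfolding face_def by (rule orb_eq[OF finH bij_sa])

lemma face_sub: "d \<in> H \<Longrightarrow> face d \<subseteq> H"
  unfolding face_def by (rule orb_closed) (use bij_sa bij_betw_imp_surj_on in blast)+

lemma face_sg_al: "x \<in> H \<Longrightarrow> face (sg (al x)) = face x"
proof -
  assume x: "x \<in> H"
  have "sg (al x) \<in> face x" unfolding face_def using funpow_in_orb[where f="sg \<circ> al" and n=1 and d=x] by simp
  then show ?thesis using face_eq[OF x] by blast
qed

lemma face_al: "x \<in> H \<Longrightarrow> face (al x) = face (sg x)"
proof -
  assume x: "x \<in> H"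
  have "sg x = sg (al (al x))" using al_al[OF x] by simp
  then show ?thesis using face_sg_al[OF al_in[OF x]] by simp
qed

lemma mem_region: "r \<in> regions H al sg \<Longrightarrow> y \<in> r \<Longrightarrow> r = face y \<and> y \<in> H"
proof -
  assume r: "r \<in> regions H al sg" and y: "y \<in> r"
  then obtain d where d: "d \<in> H" "r = face d" unfolding regions_eq by blast
  then have "face y = face d" using face_eq y by blast
  moreover have "y \<in> H" using face_sub[OF d(1)] d(2) y by blast
  ultimately show ?thesis using d by simp
qed

lemma face_in: "x \<in> H \<Longrightarrow> face x \<in> regions H al sg"
  unfolding regions_eq by blast

lemma incident_regions:
  assumes d: "d \<in> H"
  shows "{r \<in> regions H al sg. incident (orb sg d) r} =
     {face d, face (sg d), face (sg (sg d)), face (sg (sg (sg d)))}"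
proof -
  have dd: "sg d \<in> H" "sg (sg d) \<in> H" "sg (sg (sg d)) \<in> H" using d sg_in by auto
  show ?thesis
  proof (intro equalityI subsetI)
    fix r assume "r \<in> {r \<in> regions H al sg. incident (orb sg d) r}"
    then have r: "r \<in> regions H al sg" "orb sg d \<inter> r \<noteq> {}" unfolding incident_def by auto
    then obtain y where y: "y \<in> orb sg d" "y \<in> r" by blast
    then have "r = face y" using mem_region[OF r(1)] by blast
    then show "r \<in> {face d, face (sg d), face (sg (sg d)), face (sg (sg (sg d)))}"
      using y(1) orb_sg[OF d] by auto
  next
    fix r assume "r \<in> {face d, face (sg d), face (sg (sg d)), face (sg (sg (sg d)))}"
    then obtain y where y: "y \<in> orb sg d" "r = face y" using orb_sg[OF d] by auto
    have "y \<in> H" using y(1) orb_closed[OF sgH d] by blast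
    then show "r \<in> {r \<in> regions H al sg. incident (orb sg d) r}"
      using y face_in face_self unfolding incident_def by blast
  qed
qed

lemma distinct_faces:
  assumes d: "d \<in> H"
  shows "distinct [face d, face (sg d), face (sg (sg d)), face (sg (sg (sg d)))]"
proof -
  have "orb sg d \<in> vertices H sg" unfolding vertices_def using d by blast
  then have "card {r \<in> regions H al sg. incident (orb sg d) r} = 4"
    using red unfolding reduced_def irreducible_vertex_def by blast
  then have "card {face d, face (sg d), face (sg (sg d)), face (sg (sg (sg d)))} = 4"
    using incident_regions[OF d] by simp
  then have "card (set [face d, face (sg d), face (sg (sg d)), face (sg (sg (sg d)))]) =
     length [face d, face (sg d), face (sg (sg d)), face (sg (sg (sg d)))]" by simp
  then show ?thesis by (rule card_distinct)
qed

end

context kd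
begin

abbreviation st where "st \<equiv> straight al sg"

lemma st_eq: "st x = sg (sg (al x))" unfolding straight_def by simp

lemma stH: "st ` H \<subseteq> H" using bij_st bij_betw_imp_surj_on by blast
lemma st_in: "x \<in> H \<Longrightarrow> st x \<in> H" using stH by blast
lemma inj_st: "inj_on st H" using bij_st bij_betw_imp_inj_on by blast

lemma st_al_st: "x \<in> H \<Longrightarrow> st (al (st x)) = al x"
  unfolding st_eq using al_al sg4 al_in sg_in by simp

lemma al_not_orb:
  assumes x: "x \<in> H" shows "al x \<notin> orb st x"
proof
  assume "al x \<in> orb st x"
  then obtain j where j: "al x = (st^^j) x" unfolding orb_def by auto
  have key: "al ((st^^i) x) = (st^^(j-i)) x" if "i \<le> j" for i
    using that
  proof (induction i)
    case 0 then show ?case using j by simp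
  next
    case (Suc i)
    have yi: "(st^^i) x \<in> H" using funpow_closed[OF stH x] .
    have y1: "al ((st^^Suc i) x) \<in> H" using al_in funpow_closed[OF stH x] by blast
    have z: "(st^^(j - Suc i)) x \<in> H" using funpow_closed[OF stH x] .
    have "st (al ((st^^Suc i) x)) = al ((st^^i) x)" using st_al_st[OF yi] by simp
    also have "\<dots> = (st^^(j-i)) x" using Suc by simp
    also have "j - i = Suc (j - Suc i)" using Suc.prems by simp
    also have "(st^^Suc (j - Suc i)) x = st ((st^^(j - Suc i)) x)" by simp
    finally show ?case using inj_st y1 z inj_onD by metis
  qed
  show False
  proof (cases "even j")
    case True
    define i where "i = j div 2"
    have "i \<le> j" "j - i = i" using True unfolding i_def by auto
    then have "al ((st^^i) x) = (st^^i) x" using key by simp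
    then show False using al_neq funpow_closed[OF stH x] by blast
  next
    case False
    define i where "i = j div 2"
    have "i \<le> j" "j - i = Suc i" using False unfolding i_def by presburger+
    then have e: "al ((st^^i) x) = st ((st^^i) x)" using key by simp
    define y where "y = (st^^i) x"
    have y: "y \<in> H" unfolding y_def using funpow_closed[OF stH x] .
    have "al y = sg (sg (al y))" using e unfolding y_def st_eq by simp
    then show False using sg_period(2)[OF al_in[OF y]] by simp
  qed
qed

lemma two_orbits:
  assumes x: "x \<in> H" and y: "y \<in> H"
  shows "(\<exists>n. y = (st^^n) x) \<or> (\<exists>n. y = (st^^n) (al x))"
proof -
  let ?T = "(\<lambda>d. orb st d) ` H"
  have ne: "orb st x \<noteq> orb st (al x)" using al_not_orb[OF x] orb_self by metis
  have sub: "{orb st x, orb st (al x)} \<subseteq> ?T" using x al_in[OF x] by blast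
  have "finite ?T" using finH by simp
  moreover have "card {orb st x, orb st (al x)} = card ?T" using ne straight2 by simp
  ultimately have T: "?T = {orb st x, orb st (al x)}" using sub card_subset_eq by metis
  have "orb st y \<in> ?T" using y by blast
  then have "y \<in> orb st x \<or> y \<in> orb st (al x)" using T orb_self by (metis insertE singletonD)
  then show ?thesis unfolding orb_def by auto
qed

end

context kd
begin

abbreviation "Rel \<equiv> {(x, al x) | x. x \<in> H} \<union> {(x, sg x) | x. x \<in> H}"

lemma adj_face: "x \<in> H \<Longrightarrow> face x \<noteq> face (al x) \<Longrightarrow> adjacent H al (face x) (face (al x))"
proof -
  assume x: "x \<in> H" and ne: "face x \<noteq> face (al x)"
  have "{x, al x} \<in> edges H al" unfolding edges_def using x by blast
  moreover have "edge_incident {x, al x} (face x)" unfolding edge_incident_def using face_self[of x] by blast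
  moreover have "edge_incident {x, al x} (face (al x))" unfolding edge_incident_def using face_self[of "al x"] by blast
  ultimately show ?thesis unfolding adjacent_def using ne by blast
qed

lemma rel_step: "(e, e') \<in> Rel \<Longrightarrow> e \<in> H \<and> face e' = face (al e)"
proof -
  assume "(e, e') \<in> Rel"
  then have "e \<in> H \<and> (e' = al e \<or> e' = sg e)" by blast
  then show ?thesis using face_al[of e] by auto
qed

lemma path_exists:
  assumes "r \<in> regions H al sg" "r' \<in> regions H al sg"
  shows "\<exists>n ps. length ps = Suc n \<and> hd ps = r \<and> last ps = r' \<and> set ps \<subseteq> regions H al sg \<and>
           (\<forall>i<n. adjacent H al (ps!i) (ps!Suc i))"
proof -
  obtain y0 where y0: "y0 \<in> H" "r = face y0" using assms(1) regions_eq by auto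
  obtain y1 where y1: "y1 \<in> H" "r' = face y1" using assms(2) regions_eq by auto
  have "\<exists>n ps. length ps = Suc n \<and> hd ps = r \<and> last ps = face e \<and> set ps \<subseteq> regions H al sg \<and>
           (\<forall>i<n. adjacent H al (ps!i) (ps!Suc i))" if "(y0, e) \<in> Rel\<^sup>*" for e
    using that
  proof (induction rule: rtrancl_induct)
    case base
    show ?case by (intro exI[of _ 0] exI[of _ "[r]"]) (simp add: y0 face_in)
  next
    case (step e e')
    from rel_step[OF step.hyps(2)] have e: "e \<in> H" "face e' = face (al e)" by auto
    from step.IH obtain n ps where ps: "length ps = Suc n" "hd ps = r" "last ps = face e"
      "set ps \<subseteq> regions H al sg" "\<forall>i<n. adjacent H al (ps!i) (ps!Suc i)" by blast
    show ?case
    proof (cases "face (al e) = face e")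
      case True
      then show ?thesis using ps e(2) by (intro exI[of _ n] exI[of _ ps]) simp
    next
      case False
      have ne: "ps \<noteq> []" using ps(1) by auto
      have pn: "ps ! n = face e" using ps(1,3) ne by (simp add: last_conv_nth)
      let ?ps = "ps @ [face (al e)]"
      have "\<forall>i<Suc n. adjacent H al (?ps!i) (?ps!Suc i)"
      proof (intro allI impI)
        fix i assume i: "i < Suc n"
        show "adjacent H al (?ps!i) (?ps!Suc i)"
        proof (cases "i < n")
          case True
          then show ?thesis using ps(1,5) by (simp add: nth_append)
        next
          case False
          then have "i = n" using i by simp
          then show ?thesis using ps(1) pn adj_face[OF e(1)] False \<open>face (al e) \<noteq> face e\<close>
            by (simp add: nth_append)
        qed
      qed
      moreover have "length ?ps = Suc (Suc n)" using ps(1) by simp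
      moreover have "hd ?ps = r" using ps(2) ne by simp
      moreover have "last ?ps = face e'" using e(2) by simp
      moreover have "set ?ps \<subseteq> regions H al sg" using ps(4) face_in[OF al_in[OF e(1)]] by simp
      ultimately show ?thesis by (intro exI[of _ "Suc n"] exI[of _ ?ps]) simp
    qed
  qed
  from this[OF conn[OF y0(1) y1(1)]] show ?thesis unfolding y1(2) .
qed

end

context kd
begin

lemma finR: "finite (regions H al sg)" unfolding regions_eq using finH by simp

lemma vertex_sum:
  assumes gv: "game_version H al sg k a" and d: "d \<in> H"
   and nul: "[(\<Sum>r\<in>regions H al sg. game_matrix a (orb sg d) r * w r) = 0] (mod int k)"
  shows "int k dvd (w (face d) + w (face (sg d)) + w (face (sg (sg d))) + w (face (sg (sg (sg d)))))"
proof -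
  let ?v = "orb sg d"
  let ?I = "{r \<in> regions H al sg. incident ?v r}"
  have v: "?v \<in> vertices H sg" unfolding vertices_def using d by blast
  have irr: "irreducible_vertex H al sg ?v" using red v unfolding reduced_def by blast
  obtain c where c: "non_zero_divisor k c" "\<And>r. r \<in> regions H al sg \<Longrightarrow> incident ?v r \<Longrightarrow> [a ?v r = c] (mod int k)"
    using gv v irr unfolding game_version_def by blast
  have "(\<Sum>r\<in>regions H al sg. game_matrix a ?v r * w r) =
      (\<Sum>r\<in>regions H al sg. if incident ?v r then a ?v r * w r else 0)"
    by (rule sum.cong) (auto simp: game_matrix_def)
  also have "\<dots> = (\<Sum>r\<in>?I. a ?v r * w r)"
    using sum.inter_filter[OF finR, of "\<lambda>r. a ?v r * w r" "incident ?v"] by simp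
  finally have "(\<Sum>r\<in>regions H al sg. game_matrix a ?v r * w r) = (\<Sum>r\<in>?I. a ?v r * w r)" .
  moreover have "[(\<Sum>r\<in>?I. a ?v r * w r) = (\<Sum>r\<in>?I. c * w r)] (mod int k)"
    by (rule cong_sum) (use c(2) in \<open>auto intro: cong_scalar_right\<close>)
  moreover have "(\<Sum>r\<in>?I. c * w r) = c * (\<Sum>r\<in>?I. w r)" by (simp add: sum_distrib_left)
  ultimately have "[c * (\<Sum>r\<in>?I. w r) = 0] (mod int k)" using nul
    by (metis cong_sym cong_trans)
  then have "[(\<Sum>r\<in>?I. w r) = 0] (mod int k)" using c(1) unfolding non_zero_divisor_def by blast
  moreover have "(\<Sum>r\<in>?I. w r) = w (face d) + w (face (sg d)) + w (face (sg (sg d))) + w (face (sg (sg (sg d))))"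
    using incident_regions[OF d] distinct_faces[OF d] by (simp add: add.assoc)
  ultimately show ?thesis by (simp add: cong_0_iff)
qed

end

context kd
begin

lemma null:
  assumes gv: "game_version H al sg k a" and cb: "checkerboard H al sg S"
    and r1: "r1 \<in> regions H al sg" "r1 \<in> S" and r2: "r2 \<in> regions H al sg" "r2 \<notin> S"
    and cop: "\<And>m::int. odd m \<Longrightarrow> \<bar>m\<bar> \<le> int (dual_dist H al sg r1 r2) \<Longrightarrow> coprime m (int k)"
    and nul: "\<And>v. v \<in> vertices H sg \<Longrightarrow> [(\<Sum>r\<in>regions H al sg. game_matrix a v r * w r) = 0] (mod int k)"
    and w1: "int k dvd w r1" and w2: "int k dvd w r2"
    and r: "r \<in> regions H al sg"
  shows "int k dvd w r"
proof -
  define K where "K = int k"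
  define s where "s r = (if r \<in> S then 1 else -1::int)" for r
  have s2: "s r * s r = 1" for r unfolding s_def by simp
  define q where "q r = s r * w r" for r
  have wq: "w r = s r * q r" for r unfolding q_def
    by (metis mult.assoc mult_1 s2)
  have cbr: "r \<in> S \<longleftrightarrow> r' \<notin> S" if "r \<in> regions H al sg" "r' \<in> regions H al sg" "adjacent H al r r'" for r r'
    using cb that unfolding checkerboard_def by blast
  have adj_s: "s (face (al x)) = - s (face x)" if x: "x \<in> H" and ne: "face x \<noteq> face (al x)" for x
  proof -
    have "face x \<in> S \<longleftrightarrow> face (al x) \<notin> S"
      using cbr[OF face_in[OF x] face_in[OF al_in[OF x]] adj_face[OF x ne]] .
    then show ?thesis unfolding s_def by auto
  qed
  define J where "J x = q (face x) - q (face (al x))" for x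
  have Jal: "J (al x) = - J x" if "x \<in> H" for x unfolding J_def using al_al[OF that] by simp
  have Jv: "K dvd J x + J (sg (sg x))" if x: "x \<in> H" for x
  proof -
    define F0 where "F0 = face x"
    define F1 where "F1 = face (sg x)"
    define F2 where "F2 = face (sg (sg x))"
    define F3 where "F3 = face (sg (sg (sg x)))"
    have x1: "sg x \<in> H" and x2: "sg (sg x) \<in> H" using x sg_in by auto
    have dis: "F0 \<noteq> F1" "F1 \<noteq> F2" "F2 \<noteq> F3"
      using distinct_faces[OF x] unfolding F0_def F1_def F2_def F3_def by auto
    have e1: "face (al x) = F1" unfolding F1_def using face_al[OF x] .
    have e2: "face (al (sg x)) = F2" unfolding F2_def using face_al[OF x1] .
    have e3: "face (al (sg (sg x))) = F3" unfolding F3_def using face_al[OF x2] .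
    have s1: "s F1 = - s F0" using adj_s[OF x] e1 dis unfolding F0_def by simp
    have s2': "s F2 = - s F1" using adj_s[OF x1] e2 dis unfolding F1_def by simp
    have s3: "s F3 = - s F2" using adj_s[OF x2] e3 dis unfolding F2_def by simp
    have "nul_v": "[(\<Sum>r\<in>regions H al sg. game_matrix a (orb sg x) r * w r) = 0] (mod int k)"
      using nul x unfolding vertices_def by blast
    have "K dvd w F0 + w F1 + w F2 + w F3"
      using vertex_sum[OF gv x nul_v] unfolding K_def F0_def F1_def F2_def F3_def .
    moreover have "w F0 + w F1 + w F2 + w F3 = s F0 * (J x + J (sg (sg x)))"
      unfolding wq J_def e1 e3 using s1 s2' s3 unfolding F0_def F2_def
      by (simp add: algebra_simps)
    ultimately have "K dvd s F0 * (J x + J (sg (sg x)))" by simp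
    then have "K dvd s F0 * (s F0 * (J x + J (sg (sg x))))" by (rule dvd_mult)
    then show ?thesis by (simp add: mult.assoc[symmetric] s2)
  qed
  have Jst: "K dvd J (st x) - J x" if x: "x \<in> H" for x
  proof -
    have "K dvd J (al x) + J (sg (sg (al x)))" using Jv[OF al_in[OF x]] .
    then show ?thesis using Jal[OF x] unfolding st_eq by simp
  qed
  have Jiter: "K dvd J ((st^^n) x) - J x" if x: "x \<in> H" for x n
  proof (induction n)
    case 0 then show ?case by simp
  next
    case (Suc n)
    have "K dvd J (st ((st^^n) x)) - J ((st^^n) x)" using Jst[OF funpow_closed[OF stH x]] .
    from dvd_add[OF this Suc.IH] show ?case by simp
  qed
  obtain x0 where x0: "x0 \<in> H" using Hne by blast
  define \<beta> where "\<beta> = J x0"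
  have Jpm: "K dvd J y - \<beta> \<or> K dvd J y + \<beta>" if y: "y \<in> H" for y
    using two_orbits[OF x0 y]
  proof
    assume "\<exists>n. y = (st^^n) x0"
    then show ?thesis using Jiter[OF x0] unfolding \<beta>_def by blast
  next
    assume "\<exists>n. y = (st^^n) (al x0)"
    then obtain n where "y = (st^^n) (al x0)" by blast
    then have "K dvd J y - J (al x0)" using Jiter[OF al_in[OF x0]] by blast
    then show ?thesis using Jal[OF x0] unfolding \<beta>_def by simp
  qed
  define dd where "dd = dual_dist H al sg r1 r2"
  have "\<exists>ps. length ps = Suc dd \<and> hd ps = r1 \<and> last ps = r2 \<and> set ps \<subseteq> regions H al sg \<and>
           (\<forall>i<dd. adjacent H al (ps!i) (ps!Suc i))"
    unfolding dd_def dual_dist_def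
    by (rule LeastI_ex) (use path_exists[OF r1(1) r2(1)] in blast)
  then obtain ps where ps: "length ps = Suc dd" "hd ps = r1" "last ps = r2" "set ps \<subseteq> regions H al sg"
    "\<And>i. i < dd \<Longrightarrow> adjacent H al (ps!i) (ps!Suc i)" by blast
  have psR: "ps ! i \<in> regions H al sg" if "i \<le> dd" for i
    using ps(1,4) that nth_mem[of i ps] by (simp add: subset_iff)
  have step: "\<exists>\<epsilon>::int. (\<epsilon> = 1 \<or> \<epsilon> = -1) \<and> K dvd q \<rho>' - q \<rho> - \<epsilon> * \<beta>"
    if "\<rho> \<in> regions H al sg" "\<rho>' \<in> regions H al sg" "adjacent H al \<rho> \<rho>'" for \<rho> \<rho>'
  proof -
    from that(3) obtain e where e: "e \<in> edges H al" "edge_incident e \<rho>" "edge_incident e \<rho>'" "\<rho> \<noteq> \<rho>'"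
      unfolding adjacent_def by blast
    then obtain x where x: "x \<in> H" "e = {x, al x}" unfolding edges_def by blast
    have A: "\<rho> = face x \<or> \<rho> = face (al x)"
      using e(2) x(2) mem_region[OF that(1)] unfolding edge_incident_def by blast
    have B: "\<rho>' = face x \<or> \<rho>' = face (al x)"
      using e(3) x(2) mem_region[OF that(2)] unfolding edge_incident_def by blast
    have C: "q \<rho>' - q \<rho> = J x \<or> q \<rho>' - q \<rho> = - J x"
      using A B e(4) unfolding J_def by auto
    show ?thesis
    proof (cases "K dvd J x - \<beta>")
      case True
      show ?thesis using C
      proof
        assume "q \<rho>' - q \<rho> = J x" then show ?thesis using True by (intro exI[of _ 1]) simp
      next
        assume "q \<rho>' - q \<rho> = - J x"
        then have "q \<rho>' - q \<rho> - (-1) * \<beta> = - (J x - \<beta>)" by simp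
        then have "K dvd q \<rho>' - q \<rho> - (-1) * \<beta>" using True dvd_minus_iff by metis
        then show ?thesis by (intro exI[of _ "-1"]) simp
      qed
    next
      case False
      then have T: "K dvd J x + \<beta>" using Jpm[OF x(1)] by blast
      show ?thesis using C
      proof
        assume "q \<rho>' - q \<rho> = J x"
        then have "q \<rho>' - q \<rho> - (-1) * \<beta> = J x + \<beta>" by simp
        then show ?thesis using T by (intro exI[of _ "-1"]) simp
      next
        assume "q \<rho>' - q \<rho> = - J x"
        then have "q \<rho>' - q \<rho> - 1 * \<beta> = - (J x + \<beta>)" by simp
        then have "K dvd q \<rho>' - q \<rho> - 1 * \<beta>" using T dvd_minus_iff by metis
        then show ?thesis by (intro exI[of _ 1]) simp
      qed
    qed
  qed
  have walk: "\<exists>m::int. \<bar>m\<bar> \<le> int i \<and> even (m + int i) \<and> K dvd q (ps!i) - q r1 - m * \<beta> \<and> (ps!i \<in> S \<longleftrightarrow> even i)"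
    if "i \<le> dd" for i
    using that
  proof (induction i)
    case 0
    have "ps ! 0 = r1" using ps(1,2) by (metis hd_conv_nth list.size(3) nat.distinct(1))
    then show ?case using r1(2) by (intro exI[of _ 0]) simp
  next
    case (Suc i)
    then obtain m where m: "\<bar>m\<bar> \<le> int i" "even (m + int i)" "K dvd q (ps!i) - q r1 - m * \<beta>" "(ps!i \<in> S \<longleftrightarrow> even i)"
      by auto
    have adj: "adjacent H al (ps!i) (ps!Suc i)" using ps(5) Suc.prems by simp
    have R1: "ps!i \<in> regions H al sg" using psR Suc.prems by simp
    have R2: "ps!Suc i \<in> regions H al sg" using psR Suc.prems by simp
    obtain \<epsilon> :: int where ep: "\<epsilon> = 1 \<or> \<epsilon> = -1" "K dvd q (ps!Suc i) - q (ps!i) - \<epsilon> * \<beta>"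
      using step[OF R1 R2 adj] by blast
    have "K dvd (q (ps!Suc i) - q (ps!i) - \<epsilon> * \<beta>) + (q (ps!i) - q r1 - m * \<beta>)"
      using ep(2) m(3) by (rule dvd_add)
    then have d: "K dvd q (ps!Suc i) - q r1 - (m + \<epsilon>) * \<beta>" by (simp add: algebra_simps)
    have sS: "ps!Suc i \<in> S \<longleftrightarrow> even (Suc i)" using cbr[OF R1 R2 adj] m(4) by simp
    have "\<bar>m + \<epsilon>\<bar> \<le> int (Suc i)" using m(1) ep(1) by auto
    moreover have "even (m + \<epsilon> + int (Suc i))" using m(2) ep(1) by auto
    ultimately show ?case using d sS by blast
  qed
  obtain m where m: "\<bar>m\<bar> \<le> int dd" "even (m + int dd)" "K dvd q (ps!dd) - q r1 - m * \<beta>" "(ps!dd \<in> S \<longleftrightarrow> even dd)"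
    using walk[of dd] by auto
  have pd: "ps ! dd = r2" using ps(1,3) by (metis diff_Suc_1 last_conv_nth list.size(3) nat.distinct(1))
  have odd_dd: "odd dd" using m(4) pd r2(2) by simp
  have odd_m: "odd m" using m(2) odd_dd by simp
  have q1: "K dvd q r1" using w1 unfolding q_def K_def by simp
  have q2: "K dvd q r2" using w2 unfolding q_def K_def by simp
  have "K dvd q r2 - q r1 - m * \<beta>" using m(3) pd by simp
  then have "K dvd (q r2 - q r1) - (q r2 - q r1 - m * \<beta>)" using dvd_diff[OF q2 q1] dvd_diff by blast
  then have "K dvd m * \<beta>" by simp
  moreover have "coprime K m" using cop[OF odd_m] m(1) unfolding dd_def K_def by (simp add: coprime_commute)
  ultimately have Kb: "K dvd \<beta>" by (simp add: coprime_dvd_mult_right_iff)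
  have J0: "K dvd J y" if "y \<in> H" for y
  proof -
    from Jpm[OF that] show ?thesis
    proof
      assume "K dvd J y - \<beta>" from dvd_add[OF this Kb] show ?thesis by simp
    next
      assume "K dvd J y + \<beta>" from dvd_diff[OF this Kb] show ?thesis by simp
    qed
  qed
  obtain y1 where y1: "y1 \<in> H" "r1 = face y1" using r1(1) regions_eq by auto
  have reach: "K dvd q (face e) - q (face y1)" if "(y1, e) \<in> Rel\<^sup>*" for e
    using that
  proof (induction rule: rtrancl_induct)
    case base then show ?case by simp
  next
    case (step e e')
    from rel_step[OF step.hyps(2)] have e: "e \<in> H" "face e' = face (al e)" by auto
    have "K dvd J e" using J0[OF e(1)] .
    then have "K dvd q (face e') - q (face e)" unfolding J_def e(2)
      by (metis dvd_minus_iff minus_diff_eq)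
    from dvd_add[OF this step.IH] show ?case by simp
  qed
  obtain ye where ye: "ye \<in> H" "r = face ye" using r regions_eq by auto
  have "K dvd q r - q r1" using reach[OF conn[OF y1(1) ye(1)]] ye(2) y1(2) by simp
  from dvd_add[OF this q1] have "K dvd q r" by simp
  then have "K dvd s r * q r" by simp
  then show ?thesis unfolding K_def wq .
qed

end

context kd
begin

lemma card_V: "card H = 4 * card (vertices H sg)"
proof -
  have U: "\<Union>(vertices H sg) = H"
  proof
    show "\<Union>(vertices H sg) \<subseteq> H" unfolding vertices_def using orb_closed[OF sgH] by auto
    show "H \<subseteq> \<Union>(vertices H sg)" unfolding vertices_def using orb_self[of _ sg] by auto
  qed
  have D: "pairwise disjnt (vertices H sg)"
  proof (rule pairwiseI)
    fix A B assume A: "A \<in> vertices H sg" and B: "B \<in> vertices H sg" and ne: "A \<noteq> B"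
    obtain x where x: "x \<in> H" "A = orb sg x" using A unfolding vertices_def by blast
    obtain y where y: "y \<in> H" "B = orb sg y" using B unfolding vertices_def by blast
    show "disjnt A B"
    proof (rule ccontr)
      assume "\<not> disjnt A B"
      then obtain z where z: "z \<in> A" "z \<in> B" unfolding disjnt_def by blast
      have "orb sg z = A" using orb_eq[OF finH bij_sg x(1)] z(1) x(2) by blast
      moreover have "orb sg z = B" using orb_eq[OF finH bij_sg y(1)] z(2) y(2) by blast
      ultimately show False using ne by simp
    qed
  qed
  have F: "finite A" if A: "A \<in> vertices H sg" for A
  proof -
    obtain x where "x \<in> H" "A = orb sg x" using A unfolding vertices_def by blast
    then show ?thesis using orb_closed[OF sgH, of x] finite_subset[OF _ finH] by simp
  qed
  have "card H = sum card (vertices H sg)" using card_Union_disjoint[OF D F] U by simp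
  also have "\<dots> = sum (\<lambda>_. 4) (vertices H sg)"
    by (rule sum.cong) (auto simp: vertices_def card4)
  finally show ?thesis by simp
qed

lemma card_E: "card H = 2 * card (edges H al)"
proof -
  have U: "\<Union>(edges H al) = H"
    unfolding edges_def using al_in by blast
  have D: "pairwise disjnt (edges H al)"
  proof (rule pairwiseI)
    fix A B assume A: "A \<in> edges H al" and B: "B \<in> edges H al" and ne: "A \<noteq> B"
    obtain x where x: "x \<in> H" "A = {x, al x}" using A unfolding edges_def by blast
    obtain y where y: "y \<in> H" "B = {y, al y}" using B unfolding edges_def by blast
    show "disjnt A B"
    proof (rule ccontr)
      assume "\<not> disjnt A B"
      then obtain z where z: "z \<in> A" "z \<in> B" unfolding disjnt_def by blast
      have "{z, al z} = A" using z(1) x al_al[OF x(1)] by auto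
      moreover have "{z, al z} = B" using z(2) y al_al[OF y(1)] by auto
      ultimately show False using ne by simp
    qed
  qed
  have F: "finite A" if "A \<in> edges H al" for A
    using that unfolding edges_def by auto
  have c2: "card {d, al d} = 2" if "d \<in> H" for d using al_neq[OF that] by simp
  have "card H = sum card (edges H al)" using card_Union_disjoint[OF D F] U by simp
  also have "\<dots> = sum (\<lambda>_. 2) (edges H al)"
    by (rule sum.cong) (auto simp: edges_def c2)
  finally show ?thesis by simp
qed

lemma card_R: "card (regions H al sg) = card (vertices H sg) + 2"
  using euler card_V card_E by simp

lemma sum_restrict:
  fixes g f :: "'d set \<Rightarrow> int"
  assumes "R' \<subseteq> regions H al sg"
  shows "(\<Sum>r\<in>regions H al sg. g r * (if r \<in> R' then f r else 0)) = (\<Sum>r\<in>R'. g r * f r)"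
proof -
  have "(\<Sum>r\<in>regions H al sg. g r * (if r \<in> R' then f r else 0)) = (\<Sum>r\<in>R'. g r * (if r \<in> R' then f r else 0))"
    by (rule sum.mono_neutral_right[OF finR assms]) auto
  also have "\<dots> = (\<Sum>r\<in>R'. g r * f r)" by simp
  finally show ?thesis .
qed

lemma usf:
  assumes k2: "2 \<le> k" and gv: "game_version H al sg k a" and cb: "checkerboard H al sg S"
    and r1: "r1 \<in> regions H al sg" "r1 \<in> S" and r2: "r2 \<in> regions H al sg" "r2 \<notin> S"
    and cop: "\<And>m::int. odd m \<Longrightarrow> \<bar>m\<bar> \<le> int (dual_dist H al sg r1 r2) \<Longrightarrow> coprime m (int k)"
  shows "unique_solving_fixing H al sg k a r1 r2"
proof -
  let ?R = "regions H al sg" and ?V = "vertices H sg"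
  define K where "K = int k"
  have Kpos: "K > 0" using k2 unfolding K_def by simp
  define R' where "R' = ?R - {r1, r2}"
  have R'sub: "R' \<subseteq> ?R" unfolding R'_def by blast
  have ne12: "r1 \<noteq> r2" using r1 r2 by blast
  have cR': "card R' = card ?V" unfolding R'_def using card_R r1(1) r2(1) ne12 finR
    by (simp add: card_Diff_subset)
  have nullK: "\<And>w. (\<And>v. v \<in> ?V \<Longrightarrow> [(\<Sum>r\<in>?R. game_matrix a v r * w r) = 0] (mod int k)) \<Longrightarrow>
       int k dvd w r1 \<Longrightarrow> int k dvd w r2 \<Longrightarrow> \<forall>r\<in>?R. int k dvd w r"
    using null[OF gv cb r1 r2 cop] by blast
  have uniq: "\<forall>r\<in>?R. [p r = p' r] (mod int k)"
    if p: "solving_pattern H al sg k a c p" "[p r1 = 0] (mod int k)" "[p r2 = 0] (mod int k)"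
    and p': "solving_pattern H al sg k a c p'" "[p' r1 = 0] (mod int k)" "[p' r2 = 0] (mod int k)"
    for c p p'
  proof -
    define w where "w r = p r - p' r" for r
    have "[(\<Sum>r\<in>?R. game_matrix a v r * w r) = 0] (mod int k)" if v: "v \<in> ?V" for v
    proof -
      have A: "int k dvd c v + (\<Sum>r\<in>?R. game_matrix a v r * p r)"
        using p(1) v unfolding solving_pattern_def by (simp add: cong_0_iff)
      have B: "int k dvd c v + (\<Sum>r\<in>?R. game_matrix a v r * p' r)"
        using p'(1) v unfolding solving_pattern_def by (simp add: cong_0_iff)
      have "(\<Sum>r\<in>?R. game_matrix a v r * w r) =
          (c v + (\<Sum>r\<in>?R. game_matrix a v r * p r)) - (c v + (\<Sum>r\<in>?R. game_matrix a v r * p' r))"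
        unfolding w_def by (simp add: right_diff_distrib sum_subtractf)
      then show ?thesis using dvd_diff[OF A B] by (simp add: cong_0_iff)
    qed
    moreover have "int k dvd w r1" using p(2) p'(2) unfolding w_def cong_0_iff using dvd_diff by blast
    moreover have "int k dvd w r2" using p(3) p'(3) unfolding w_def cong_0_iff using dvd_diff by blast
    ultimately have "\<forall>r\<in>?R. int k dvd w r" using nullK by blast
    then show ?thesis unfolding w_def by (simp add: cong_iff_dvd_diff)
  qed
  \<comment> \<open>existence by counting\<close>
  define A where "A = PiE R' (\<lambda>_. {0..<K})"
  define B where "B = PiE ?V (\<lambda>_. {0..<K})"
  define \<Phi> where "\<Phi> p = restrict (\<lambda>v. (\<Sum>r\<in>R'. game_matrix a v r * p r) mod K) ?V" for p
  have finV: "finite ?V" unfolding vertices_def using finH by simp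
  have finR': "finite R'" using finR R'sub finite_subset by blast
  have PhiAB: "\<Phi> ` A \<subseteq> B" unfolding \<Phi>_def B_def using Kpos by auto
  have inj: "inj_on \<Phi> A"
  proof (rule inj_onI)
    fix p p' assume pA: "p \<in> A" and p'A: "p' \<in> A" and eq: "\<Phi> p = \<Phi> p'"
    define w where "w r = (if r \<in> R' then p r - p' r else 0)" for r
    have "[(\<Sum>r\<in>?R. game_matrix a v r * w r) = 0] (mod int k)" if v: "v \<in> ?V" for v
    proof -
      have "(\<Sum>r\<in>R'. game_matrix a v r * p r) mod K = (\<Sum>r\<in>R'. game_matrix a v r * p' r) mod K"
        using fun_cong[OF eq, of v] v unfolding \<Phi>_def by simp
      then have "K dvd (\<Sum>r\<in>R'. game_matrix a v r * p r) - (\<Sum>r\<in>R'. game_matrix a v r * p' r)"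
        by (simp add: mod_eq_dvd_iff)
      moreover have "(\<Sum>r\<in>?R. game_matrix a v r * w r) =
           (\<Sum>r\<in>R'. game_matrix a v r * p r) - (\<Sum>r\<in>R'. game_matrix a v r * p' r)"
        unfolding w_def sum_restrict[OF R'sub] by (simp add: right_diff_distrib sum_subtractf)
      ultimately show ?thesis unfolding K_def by (simp add: cong_0_iff)
    qed
    moreover have "w r1 = 0" "w r2 = 0" unfolding w_def R'_def by auto
    ultimately have all: "\<forall>r\<in>?R. int k dvd w r" using nullK by simp
    show "p = p'"
    proof (rule PiE_ext[OF pA[unfolded A_def] p'A[unfolded A_def]])
      fix r assume r: "r \<in> R'"
      have "r \<in> ?R" using r R'sub by blast
      then have "int k dvd w r" using all by blast
      then have "K dvd p r - p' r" using r unfolding w_def K_def by simp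
      then have "p r mod K = p' r mod K" by (simp add: mod_eq_dvd_iff)
      moreover have "p r \<in> {0..<K}" "p' r \<in> {0..<K}" using pA p'A r unfolding A_def by auto
      ultimately show "p r = p' r" by simp
    qed
  qed
  have cA: "card A = k ^ card R'" unfolding A_def K_def using finR' by (simp add: card_PiE)
  have cB: "card B = k ^ card ?V" unfolding B_def K_def using finV by (simp add: card_PiE)
  have finB: "finite B" unfolding B_def using finV by (simp add: finite_PiE)
  have img: "\<Phi> ` A = B"
    using card_subset_eq[OF finB PhiAB] card_image[OF inj] cA cB cR' by simp
  have ex: "\<exists>p. solving_pattern H al sg k a c p \<and> [p r1 = 0] (mod int k) \<and> [p r2 = 0] (mod int k)" for c
  proof -
    define b where "b = restrict (\<lambda>v. (- c v) mod K) ?V"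
    have "b \<in> B" unfolding b_def B_def using Kpos by auto
    then obtain p where pA: "p \<in> A" and pb: "\<Phi> p = b" using img by blast
    define p0 where "p0 r = (if r \<in> R' then p r else 0)" for r
    have "solving_pattern H al sg k a c p0" unfolding solving_pattern_def
    proof
      fix v assume v: "v \<in> ?V"
      have "(\<Sum>r\<in>R'. game_matrix a v r * p r) mod K = (- c v) mod K"
        using fun_cong[OF pb, of v] v unfolding \<Phi>_def b_def by simp
      then have "K dvd (\<Sum>r\<in>R'. game_matrix a v r * p r) - (- c v)" by (simp add: mod_eq_dvd_iff)
      moreover have "(\<Sum>r\<in>?R. game_matrix a v r * p0 r) = (\<Sum>r\<in>R'. game_matrix a v r * p r)"
        unfolding p0_def sum_restrict[OF R'sub] ..
      ultimately show "[c v + (\<Sum>r\<in>?R. game_matrix a v r * p0 r) = 0] (mod int k)"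
        unfolding K_def by (simp add: cong_0_iff add.commute)
    qed
    moreover have "p0 r1 = 0" "p0 r2 = 0" unfolding p0_def R'_def by auto
    ultimately show ?thesis by auto
  qed
  show ?thesis unfolding unique_solving_fixing_def
  proof (intro allI conjI impI ballI)
    fix c show "\<exists>p. solving_pattern H al sg k a c p \<and> [p r1 = 0] (mod int k) \<and> [p r2 = 0] (mod int k)"
      by (rule ex)
  next
    fix c p q r
    assume "solving_pattern H al sg k a c p \<and> [p r1 = 0] (mod int k) \<and> [p r2 = 0] (mod int k) \<and>
                 solving_pattern H al sg k a c q \<and> [q r1 = 0] (mod int k) \<and> [q r2 = 0] (mod int k)"
      and "r \<in> regions H al sg"
    then show "[p r = q r] (mod int k)" using uniq[of c p q] by blast
  qed
qed

end

theorem mainTheorem13: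
  fixes H :: "'d set" and al sg :: "'d \<Rightarrow> 'd" and k :: nat
    and a :: "'d set \<Rightarrow> 'd set \<Rightarrow> int" and S :: "'d set set" and r1 r2 :: "'d set"
  assumes "knot_diagram H al sg"
    and "reduced H al sg"
    and "2 \<le> k"
    and "game_version H al sg k a"
    and "checkerboard H al sg S"
    and "r1 \<in> regions H al sg" and "r1 \<in> S"
    and "r2 \<in> regions H al sg" and "r2 \<notin> S"
  shows "((\<exists>t::nat. t \<ge> 1 \<and> k = 2 ^ t) \<longrightarrow> unique_solving_fixing H al sg k a r1 r2) \<and>
         ((\<forall>t::nat. k \<noteq> 2 ^ t) \<longrightarrow>
            dual_dist H al sg r1 r2 < (LEAST p::nat. prime p \<and> odd p \<and> p dvd k) \<longrightarrow>
            unique_solving_fixing H al sg k a r1 r2)"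
proof -
  interpret kd H al sg using assms(1,2) by unfold_locales
  note U = usf[OF assms(3,4,5,6,7,8,9)]
  show ?thesis
  proof (intro conjI impI)
    assume "\<exists>t::nat. t \<ge> 1 \<and> k = 2 ^ t"
    then obtain t :: nat where t: "k = 2 ^ t" by blast
    show "unique_solving_fixing H al sg k a r1 r2"
    proof (rule U)
      fix m :: int assume "odd m"
      then have "coprime m 2" by simp
      then have "coprime m (2 ^ t)" by simp
      then show "coprime m (int k)" using t by simp
    qed
  next
    assume lt: "dual_dist H al sg r1 r2 < (LEAST p::nat. prime p \<and> odd p \<and> p dvd k)"
    show "unique_solving_fixing H al sg k a r1 r2"
    proof (rule U)
      fix m :: int assume om: "odd m" and mb: "\<bar>m\<bar> \<le> int (dual_dist H al sg r1 r2)"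
      define M where "M = nat \<bar>m\<bar>"
      have mM: "\<bar>m\<bar> = int M" unfolding M_def by simp
      have oM: "odd M" using om unfolding M_def by (simp add: even_nat_iff)
      have "coprime M k"
      proof (rule ccontr)
        assume nc: "\<not> coprime M k"
        then have "gcd M k \<noteq> 1" by (simp add: coprime_iff_gcd_eq_1)
        then obtain p where p: "prime p" "p dvd gcd M k" using prime_factor_nat by blast
        have pM: "p dvd M" and pk: "p dvd k" using p(2) by auto
        have "odd p" using pM oM dvd_trans by blast
        then have "(LEAST p::nat. prime p \<and> odd p \<and> p dvd k) \<le> p" using p(1) pk by (intro Least_le) simp
        moreover have "M \<noteq> 0" using odd_pos[OF oM] by simp
        then have "p \<le> M" using pM by (simp add: dvd_imp_le)
        moreover have "M \<le> dual_dist H al sg r1 r2" using mb mM by simp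
        ultimately show False using lt by simp
      qed
      then have "coprime (int M) (int k)" by simp
      then have "coprime \<bar>m\<bar> (int k)" using mM by simp
      then show "coprime m (int k)" by simp
    qed
  qed
qed

end
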